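(* Every $W$-space is strongly $C$-selective.
   Context: All spaces are assumed $T_1$. For spaces $Y$ and $X$, a map $\varphi: Y\to\mathcal P(X)\setminus\{\emptyset\}$ is lower semicontinuous (l.s.c.) if for every open $U\subseteq X$ the set $\varphi^{-1}(U)=\{y\in Y:\varphi(y)\cap U\neq\emptyset\}$ is open in $Y$. A selection of $\varphi$ is a map $f:Y\to X$ with $f(y)\in\varphi(y)$ for all $y$. $X$ is strongly $Y$-selective if every l.s.c. map $Y\to\mathcal P(X)\setminus\{\emptyset\}$ has a continuous selection, and $X$ is strongly $C$-selective if it is strongly $Y$-selective for every countable regular space $Y$. For $x\in X$ consider the game in which, at stage $n$, player I chooses an open set $U_n\ni x$ and player II chooses a point $x_n\in U_n$; player I wins if the sequence $(x_n)$ converges to $x$. $X$ is a $W$-space if player I has a winning strategy in this game at every point $x\in X$. *)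

theory Defs
  imports "HOL-Analysis.Analysis"
begin

definition lsc_map :: "'b topology \<Rightarrow> 'a topology \<Rightarrow> ('b \<Rightarrow> 'a set) \<Rightarrow> bool" where
  "lsc_map Y X \<phi> \<longleftrightarrow>
     (\<forall>y\<in>topspace Y. \<phi> y \<noteq> {} \<and> \<phi> y \<subseteq> topspace X) \<and>
     (\<forall>U. openin X U \<longrightarrow> openin Y {y \<in> topspace Y. \<phi> y \<inter> U \<noteq> {}})"

definition strongly_selective :: "'a topology \<Rightarrow> 'b topology \<Rightarrow> bool" where
  "strongly_selective X Y \<longleftrightarrow>
     (\<forall>\<phi>. lsc_map Y X \<phi> \<longrightarrow>
        (\<exists>f. continuous_map Y X f \<and> (\<forall>y\<in>topspace Y. f y \<in> \<phi> y)))"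

text \<open>Player I strategy: maps the finite history of II's moves to an open nbhd of x;
  it is winning if every play consistent with it converges to x.\<close>
definition W_point :: "'a topology \<Rightarrow> 'a \<Rightarrow> bool" where
  "W_point X x \<longleftrightarrow>
     (\<exists>\<sigma> :: 'a list \<Rightarrow> 'a set.
        (\<forall>h. openin X (\<sigma> h) \<and> x \<in> \<sigma> h) \<and>
        (\<forall>s :: nat \<Rightarrow> 'a. (\<forall>n. s n \<in> \<sigma> (map s [0..<n])) \<longrightarrow> limitin X s x sequentially))"

definition W_space :: "'a topology \<Rightarrow> bool" where
  "W_space X \<longleftrightarrow> (\<forall>x\<in>topspace X. W_point X x)"

end

theory Submission
  imports Defs
begin

lemma countable_clopen_base:
  assumes T1: "t1_space Y" and R: "regular_space Y" and C: "countable (topspace Y)"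
    and G: "openin Y G" and y: "y \<in> G"
  shows "\<exists>D. closedin Y D \<and> openin Y D \<and> y \<in> D \<and> D \<subseteq> G"
proof -
  have N: "normal_space Y"
    using C R countable_imp_Lindelof_space regular_Lindelof_imp_normal_space by blast
  have yY: "y \<in> topspace Y" using G y openin_subset by blast
  have c1: "closedin Y {y}" using T1 yY by (simp add: t1_space_closedin_singleton)
  have c2: "closedin Y (topspace Y - G)" using G by blast
  have dj: "disjnt {y} (topspace Y - G)" using y by auto
  obtain g where g: "continuous_map Y euclideanreal g" "g ` {y} \<subseteq> {0}" "g ` (topspace Y - G) \<subseteq> {1}"
    using Urysohn_lemma_alt[OF N c1 c2 dj, of 0 1] by blast
  have "countable (g ` topspace Y)" using C by blast
  moreover have "uncountable {0::real<..<1}" by (simp add: uncountable_open_interval)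
  ultimately obtain r where r: "r \<in> {0::real<..<1}" "r \<notin> g ` topspace Y"
    by (metis countable_subset subsetI)
  define D where "D = {z \<in> topspace Y. g z \<in> {..<r}}"
  have "D = {z \<in> topspace Y. g z \<in> {..r}}" using r(2) unfolding D_def by force
  hence "closedin Y D" using closedin_continuous_map_preimage[OF g(1), of "{..r}"] by simp
  moreover have "openin Y D" unfolding D_def using openin_continuous_map_preimage[OF g(1), of "{..<r}"] by simp
  moreover have "y \<in> D" using g(2) r(1) yY by (auto simp: D_def)
  moreover have "D \<subseteq> G" using g(3) r(1) by (force simp: D_def)
  ultimately show ?thesis by blast
qed

locale selconstr =
  fixes X :: "'a topology" and Y :: "'b topology" and \<phi> :: "'b \<Rightarrow> 'a set"
    and e :: "nat \<Rightarrow> 'b" and task :: "nat \<Rightarrow> nat \<times> nat list"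
  assumes lsc: "lsc_map Y X \<phi>" and W: "W_space X" and T1: "t1_space Y"
    and zd: "\<And>y G. openin Y G \<Longrightarrow> y \<in> G \<Longrightarrow> \<exists>D. closedin Y D \<and> openin Y D \<and> y \<in> D \<and> D \<subseteq> G"
    and e: "range e = topspace Y"
    and task: "\<And>k s m. \<exists>n\<ge>m. task n = (k, s)"
begin

definition idx :: "'b \<Rightarrow> nat" where "idx y = (LEAST j. e j = y)"
definition S :: "'a \<Rightarrow> 'a list \<Rightarrow> 'a set" where
  "S p = (SOME \<sigma>. (\<forall>h. openin X (\<sigma> h) \<and> p \<in> \<sigma> h) \<and>
      (\<forall>s. (\<forall>n. s n \<in> \<sigma> (map s [0..<n])) \<longrightarrow> limitin X s p sequentially))"
definition newx where "newx n Om = (SOME x. x \<in> \<phi> (e n) \<inter> Om (e n))"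
definition active where "active n \<longleftrightarrow> fst (task n) \<le> n \<and> (\<forall>i\<in>set (snd (task n)). i \<le> n)"
definition sig where
  "sig xs n = S (xs (idx (e (fst (task n))))) (map (\<lambda>i. xs (idx (e i))) (snd (task n)))"
definition Dprop where
  "Dprop n xs Om D \<longleftrightarrow> closedin Y D \<and> openin Y D \<and> e (fst (task n)) \<in> D \<and>
     (\<forall>z\<in>D. \<phi> z \<inter> (Om z \<inter> sig xs n) \<noteq> {} \<and> Om z = Om (e (fst (task n)))) \<and>
     (\<forall>j\<le>n. e j \<in> D \<longrightarrow> e j = e (fst (task n)))"
definition Dset where "Dset n xs Om = (SOME D. Dprop n xs Om D)"
definition step :: "nat \<Rightarrow> (nat \<Rightarrow> 'a) \<times> ('b \<Rightarrow> 'a set) \<Rightarrow> (nat \<Rightarrow> 'a) \<times> ('b \<Rightarrow> 'a set)" where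
  "step n sa = (let xs' = (fst sa)(n := newx n (snd sa)) in
     (xs', if active n then (\<lambda>z. if z \<in> Dset n xs' (snd sa) then snd sa z \<inter> sig xs' n else snd sa z)
           else snd sa))"
primrec st :: "nat \<Rightarrow> (nat \<Rightarrow> 'a) \<times> ('b \<Rightarrow> 'a set)" where
  "st 0 = (\<lambda>_. undefined, \<lambda>_. topspace X)"
| "st (Suc n) = step n (st n)"
definition XS where "XS n = fst (st n)"
definition OM where "OM n = snd (st n)"

lemma XS_Suc: "XS (Suc n) = (XS n)(n := newx n (OM n))"
  by (simp add: XS_def OM_def step_def Let_def)
lemma OM_Suc: "OM (Suc n) z = (if active n \<and> z \<in> Dset n (XS (Suc n)) (OM n)
    then OM n z \<inter> sig (XS (Suc n)) n else OM n z)"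
proof -
  have 1: "XS (Suc n) = (XS n)(n := newx n (OM n))" by (rule XS_Suc)
  have "OM (Suc n) = (if active n then (\<lambda>z. if z \<in> Dset n ((XS n)(n := newx n (OM n))) (OM n)
    then OM n z \<inter> sig ((XS n)(n := newx n (OM n))) n else OM n z) else OM n)"
    unfolding OM_def XS_def by (simp add: step_def Let_def)
  then show ?thesis unfolding 1 by simp
qed
lemma XS0: "OM 0 = (\<lambda>_. topspace X)" by (simp add: OM_def)

lemma e_in: "e j \<in> topspace Y" using e by blast
lemma e_idx: assumes "y \<in> topspace Y" shows "e (idx y) = y"
proof -
  obtain j where "e j = y" using assms e by (metis imageE)
  then show ?thesis unfolding idx_def by (rule LeastI)
qed
lemma idx_le: "idx (e j) \<le> j" unfolding idx_def by (rule Least_le) simp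

lemma phi: "y \<in> topspace Y \<Longrightarrow> \<phi> y \<noteq> {} \<and> \<phi> y \<subseteq> topspace X"
  using lsc by (simp add: lsc_map_def)
lemma lsc_open: "openin X U \<Longrightarrow> openin Y {y\<in>topspace Y. \<phi> y \<inter> U \<noteq> {}}"
  using lsc by (simp add: lsc_map_def)

lemma S_prop: assumes "p \<in> topspace X"
  shows "(\<forall>h. openin X (S p h) \<and> p \<in> S p h) \<and>
      (\<forall>s. (\<forall>n. s n \<in> S p (map s [0..<n])) \<longrightarrow> limitin X s p sequentially)"
proof -
  have "W_point X p" using W assms by (simp add: W_space_def)
  then show ?thesis unfolding S_def W_point_def by (rule someI_ex)
qed

lemma XS_stable: "j < n \<Longrightarrow> XS n j = XS (Suc j) j"
proof (induction n)
  case 0 then show ?case by simp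
next
  case (Suc n)
  then show ?case by (cases "j = n") (auto simp: XS_Suc)
qed

lemma OM_mono1: "OM (Suc n) y \<subseteq> OM n y"
  by (auto simp: OM_Suc)
lemma OM_mono: "m \<le> n \<Longrightarrow> OM n y \<subseteq> OM m y"
proof (induction n)
  case 0 then show ?case by simp
next
  case (Suc n)
  then show ?case using OM_mono1 by (metis le_Suc_eq order_refl order_trans)
qed

definition Inv where
  "Inv n \<longleftrightarrow> (\<forall>y\<in>topspace Y. openin X (OM n y) \<and> \<phi> y \<inter> OM n y \<noteq> {} \<and>
      (\<exists>N. openin Y N \<and> y \<in> N \<and> (\<forall>z\<in>N. OM n z = OM n y)) \<and>
      (idx y < n \<longrightarrow> XS n (idx y) \<in> \<phi> y \<inter> OM n y))"

lemma Inv0: "Inv 0"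
  unfolding Inv_def
proof (intro ballI conjI impI)
  fix y assume y: "y \<in> topspace Y"
  show "openin X (OM 0 y)" by (simp add: XS0)
  show "\<phi> y \<inter> OM 0 y \<noteq> {}" using phi[OF y] by (auto simp: XS0)
  show "\<exists>N. openin Y N \<and> y \<in> N \<and> (\<forall>z\<in>N. OM 0 z = OM 0 y)"
    using y by (intro exI[of _ "topspace Y"]) (simp add: XS0)
qed simp

lemma xs'_prop:
  assumes I: "Inv n" and y: "y \<in> topspace Y" and le: "idx y \<le> n"
  shows "XS (Suc n) (idx y) \<in> \<phi> y \<inter> OM n y"
proof (cases "idx y < n")
  case True
  have "XS n (idx y) \<in> \<phi> y \<inter> OM n y" using I y True unfolding Inv_def by blast
  moreover have "XS (Suc n) (idx y) = XS n (idx y)" using True by (simp add: XS_Suc)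
  ultimately show ?thesis by simp
next
  case False
  then have n: "idx y = n" using le by simp
  have en: "e n = y" using e_idx[OF y] n by simp
  have "\<phi> y \<inter> OM n y \<noteq> {}" using I y unfolding Inv_def by blast
  then have "\<exists>x. x \<in> \<phi> (e n) \<inter> OM n (e n)" using en by blast
  then have "newx n (OM n) \<in> \<phi> (e n) \<inter> OM n (e n)" unfolding newx_def by (rule someI_ex)
  then show ?thesis using n en by (simp add: XS_Suc)
qed

lemma D_exists:
  assumes I: "Inv n" and act: "active n"
  shows "Dprop n (XS (Suc n)) (OM n) (Dset n (XS (Suc n)) (OM n))"
proof -
  define k where "k = fst (task n)"
  define yk where "yk = e k"
  have ykY: "yk \<in> topspace Y" by (simp add: yk_def e_in)
  have kn: "idx yk \<le> n" using act idx_le[of k] by (simp add: active_def k_def yk_def)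
  define p where "p = XS (Suc n) (idx yk)"
  have p: "p \<in> \<phi> yk \<inter> OM n yk" using xs'_prop[OF I ykY kn] by (simp add: p_def)
  then have pX: "p \<in> topspace X" using phi[OF ykY] by blast
  have sigeq: "sig (XS (Suc n)) n = S p (map (\<lambda>i. XS (Suc n) (idx (e i))) (snd (task n)))"
    by (simp add: sig_def p_def yk_def k_def)
  have sigo: "openin X (sig (XS (Suc n)) n)" and psig: "p \<in> sig (XS (Suc n)) n"
    using S_prop[OF pX] sigeq by auto
  define Ob where "Ob = OM n yk \<inter> sig (XS (Suc n)) n"
  have Oo: "openin X Ob" using I ykY sigo by (auto simp: Ob_def Inv_def)
  define G where "G = {y\<in>topspace Y. \<phi> y \<inter> Ob \<noteq> {}}"
  have Go: "openin Y G" unfolding G_def using lsc_open[OF Oo] .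
  have ykG: "yk \<in> G" using p psig ykY by (auto simp: G_def Ob_def)
  obtain N where N: "openin Y N" "yk \<in> N" "\<forall>z\<in>N. OM n z = OM n yk"
    using I ykY by (auto simp: Inv_def)
  define F where "F = e ` {..n} - {yk}"
  have "finite F" "F \<subseteq> topspace Y" using e_in by (auto simp: F_def)
  then have "closedin Y F" using T1 unfolding t1_space_closedin_finite by blast
  then have Fo: "openin Y (topspace Y - F)" by blast
  define H where "H = G \<inter> N \<inter> (topspace Y - F)"
  have Ho: "openin Y H" using Go N(1) Fo by (auto simp: H_def)
  have ykH: "yk \<in> H" using ykG N(2) ykY by (auto simp: H_def F_def)
  obtain D where D: "closedin Y D" "openin Y D" "yk \<in> D" "D \<subseteq> H" using zd[OF Ho ykH] by blast
  have "Dprop n (XS (Suc n)) (OM n) D"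
    unfolding Dprop_def
  proof (intro conjI)
    show "closedin Y D" "openin Y D" using D by auto
    show "e (fst (task n)) \<in> D" using D(3) by (simp add: yk_def k_def)
    show "\<forall>z\<in>D. \<phi> z \<inter> (OM n z \<inter> sig (XS (Suc n)) n) \<noteq> {} \<and> OM n z = OM n (e (fst (task n)))"
    proof
      fix z assume z: "z \<in> D"
      then have zH: "z \<in> G" "z \<in> N" using D(4) by (auto simp: H_def)
      then have "OM n z = OM n yk" using N(3) by blast
      then show "\<phi> z \<inter> (OM n z \<inter> sig (XS (Suc n)) n) \<noteq> {} \<and> OM n z = OM n (e (fst (task n)))"
        using zH(1) by (simp add: G_def Ob_def yk_def k_def)
    qed
    show "\<forall>j\<le>n. e j \<in> D \<longrightarrow> e j = e (fst (task n))"
    proof (intro allI impI)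
      fix j assume j: "j \<le> n" "e j \<in> D"
      then have "e j \<notin> F" using D(4) by (auto simp: H_def)
      then show "e j = e (fst (task n))" using j(1) by (auto simp: F_def yk_def k_def)
    qed
  qed
  then show ?thesis unfolding Dset_def by (rule someI)
qed

lemma sig_prop:
  assumes I: "Inv n" and act: "active n"
  shows "openin X (sig (XS (Suc n)) n) \<and> XS (Suc n) (idx (e (fst (task n)))) \<in> sig (XS (Suc n)) n"
proof -
  define k where "k = fst (task n)"
  define yk where "yk = e k"
  have ykY: "yk \<in> topspace Y" by (simp add: yk_def e_in)
  have kn: "idx yk \<le> n" using act idx_le[of k] by (simp add: active_def k_def yk_def)
  define p where "p = XS (Suc n) (idx yk)"
  have p: "p \<in> \<phi> yk \<inter> OM n yk" using xs'_prop[OF I ykY kn] by (simp add: p_def)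
  then have pX: "p \<in> topspace X" using phi[OF ykY] by blast
  have sigeq: "sig (XS (Suc n)) n = S p (map (\<lambda>i. XS (Suc n) (idx (e i))) (snd (task n)))"
    by (simp add: sig_def p_def yk_def k_def)
  show ?thesis using S_prop[OF pX] sigeq by (simp add: p_def yk_def k_def)
qed

lemma Inv_Suc:
  assumes I: "Inv n" shows "Inv (Suc n)"
  unfolding Inv_def
proof (intro ballI conjI impI)
  fix y assume y: "y \<in> topspace Y"
  define D where "D = Dset n (XS (Suc n)) (OM n)"
  have DP: "Dprop n (XS (Suc n)) (OM n) D" if "active n" using D_exists[OF I that] by (simp add: D_def)
  have Iy: "openin X (OM n y)" "\<phi> y \<inter> OM n y \<noteq> {}"
    "\<exists>N. openin Y N \<and> y \<in> N \<and> (\<forall>z\<in>N. OM n z = OM n y)"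
    using I y unfolding Inv_def by blast+
  have OMS: "\<And>z. OM (Suc n) z = (if active n \<and> z \<in> D then OM n z \<inter> sig (XS (Suc n)) n else OM n z)"
    by (simp add: OM_Suc D_def)
  show "openin X (OM (Suc n) y)"
  proof (cases "active n \<and> y \<in> D")
    case True
    then show ?thesis using Iy(1) sig_prop[OF I] by (simp add: OMS openin_Int)
  next
    case False
    then have "OM (Suc n) y = OM n y" by (rule trans[OF OMS if_not_P])
    then show ?thesis using Iy(1) by simp
  qed
  show "\<phi> y \<inter> OM (Suc n) y \<noteq> {}"
  proof (cases "active n \<and> y \<in> D")
    case True
    then have "\<phi> y \<inter> (OM n y \<inter> sig (XS (Suc n)) n) \<noteq> {}"
      using DP unfolding Dprop_def by blast
    moreover have "OM (Suc n) y = OM n y \<inter> sig (XS (Suc n)) n"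
      using True by (intro trans[OF OMS if_P]) simp
    ultimately show ?thesis by simp
  next
    case False
    then have "OM (Suc n) y = OM n y" by (rule trans[OF OMS if_not_P])
    then show ?thesis using Iy(2) by simp
  qed
  obtain N where N: "openin Y N" "y \<in> N" "\<forall>z\<in>N. OM n z = OM n y" using Iy(3) by blast
  show "\<exists>N. openin Y N \<and> y \<in> N \<and> (\<forall>z\<in>N. OM (Suc n) z = OM (Suc n) y)"
  proof (cases "active n")
    case act: True
    have Dc: "closedin Y D" "openin Y D" using DP[OF act] unfolding Dprop_def by blast+
    show ?thesis
    proof (cases "y \<in> D")
      case True
      have Oy: "OM (Suc n) y = OM n y \<inter> sig (XS (Suc n)) n"
        using True act by (intro trans[OF OMS if_P]) simp
      have "\<forall>z\<in>N \<inter> D. OM (Suc n) z = OM (Suc n) y"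
      proof
        fix z assume z: "z \<in> N \<inter> D"
        have "OM (Suc n) z = OM n z \<inter> sig (XS (Suc n)) n"
          using z act by (intro trans[OF OMS if_P]) simp
        then show "OM (Suc n) z = OM (Suc n) y" using Oy N(3) z by simp
      qed
      moreover have "openin Y (N \<inter> D)" using N(1) Dc(2) by (rule openin_Int)
      ultimately show ?thesis using N(2) True by blast
    next
      case False
      have "openin Y (topspace Y - D)" using Dc by blast
      then have op: "openin Y (N \<inter> (topspace Y - D))" using N(1) by (intro openin_Int)
      have Oy: "OM (Suc n) y = OM n y"
        using False by (intro trans[OF OMS if_not_P]) simp
      have "\<forall>z\<in>N \<inter> (topspace Y - D). OM (Suc n) z = OM (Suc n) y"
      proof
        fix z assume z: "z \<in> N \<inter> (topspace Y - D)"
        have "OM (Suc n) z = OM n z"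
          using z by (intro trans[OF OMS if_not_P]) simp
        then show "OM (Suc n) z = OM (Suc n) y" using Oy N(3) z by simp
      qed
      then show ?thesis using op N(2) y False by blast
    qed
  next
    case False
    then have "\<forall>z. OM (Suc n) z = OM n z" by (intro allI trans[OF OMS if_not_P]) simp
    then show ?thesis using N by metis
  qed
  assume lt: "idx y < Suc n"
  have x: "XS (Suc n) (idx y) \<in> \<phi> y \<inter> OM n y" using xs'_prop[OF I y] lt by simp
  show "XS (Suc n) (idx y) \<in> \<phi> y \<inter> OM (Suc n) y"
  proof (cases "active n \<and> y \<in> D")
    case True
    have le: "idx y \<le> n" using lt by simp
    have "\<forall>j\<le>n. e j \<in> D \<longrightarrow> e j = e (fst (task n))" using DP True unfolding Dprop_def by blast
    then have "e (idx y) = e (fst (task n))" using le True e_idx[OF y] by simp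
    then have "y = e (fst (task n))" using e_idx[OF y] by simp
    then have "XS (Suc n) (idx y) \<in> sig (XS (Suc n)) n" using sig_prop[OF I] True by simp
    moreover have "OM (Suc n) y = OM n y \<inter> sig (XS (Suc n)) n"
      using True by (intro trans[OF OMS if_P]) simp
    ultimately show ?thesis using x by simp
  next
    case False
    then have "OM (Suc n) y = OM n y" by (rule trans[OF OMS if_not_P])
    then show ?thesis using x by simp
  qed
qed

lemma Inv_all: "Inv n"
  by (induction n) (simp_all add: Inv0 Inv_Suc)

definition sel where "sel y = XS (Suc (idx y)) (idx y)"

lemma sel_XS: "idx y < n \<Longrightarrow> XS n (idx y) = sel y"
  unfolding sel_def by (rule XS_stable)

lemma sel_in: assumes y: "y \<in> topspace Y" shows "sel y \<in> \<phi> y \<inter> OM n y"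
proof -
  define m where "m = max n (Suc (idx y))"
  have lt: "idx y < m" by (simp add: m_def)
  have I: "Inv m" by (rule Inv_all)
  have "XS m (idx y) \<in> \<phi> y \<inter> OM m y" using I y lt unfolding Inv_def by blast
  moreover have "OM m y \<subseteq> OM n y" by (rule OM_mono) (simp add: m_def)
  ultimately show ?thesis unfolding sel_XS[OF lt] by blast
qed

lemma D_main:
  assumes act: "active n"
  shows "openin Y (Dset n (XS (Suc n)) (OM n)) \<and> e (fst (task n)) \<in> Dset n (XS (Suc n)) (OM n) \<and>
    (\<forall>z\<in>Dset n (XS (Suc n)) (OM n). sel z \<in> S (sel (e (fst (task n)))) (map (\<lambda>i. sel (e i)) (snd (task n))))"
proof -
  define D where "D = Dset n (XS (Suc n)) (OM n)"
  have DP: "Dprop n (XS (Suc n)) (OM n) D" using D_exists[OF Inv_all act] by (simp add: D_def)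
  have k: "idx (e (fst (task n))) < Suc n" using act idx_le[of "fst (task n)"] by (simp add: active_def)
  have l: "map (\<lambda>i. XS (Suc n) (idx (e i))) (snd (task n)) = map (\<lambda>i. sel (e i)) (snd (task n))"
  proof (rule map_cong[OF refl])
    fix i assume "i \<in> set (snd (task n))"
    then have "idx (e i) < Suc n" using act idx_le[of i] by (auto simp: active_def)
    then show "XS (Suc n) (idx (e i)) = sel (e i)" by (rule sel_XS)
  qed
  have sigeq: "sig (XS (Suc n)) n = S (sel (e (fst (task n)))) (map (\<lambda>i. sel (e i)) (snd (task n)))"
    unfolding sig_def l sel_XS[OF k] ..
  have "\<forall>z\<in>D. sel z \<in> S (sel (e (fst (task n)))) (map (\<lambda>i. sel (e i)) (snd (task n)))"
  proof
    fix z assume z: "z \<in> D"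
    have zY: "z \<in> topspace Y" using DP z unfolding Dprop_def using openin_subset by blast
    have "OM (Suc n) z = OM n z \<inter> sig (XS (Suc n)) n"
      using z act by (intro trans[OF OM_Suc if_P]) (simp add: D_def)
    then show "sel z \<in> S (sel (e (fst (task n)))) (map (\<lambda>i. sel (e i)) (snd (task n)))"
      using sel_in[OF zY, of "Suc n"] sigeq by simp
  qed
  then show ?thesis using DP unfolding Dprop_def D_def by blast
qed

lemma sel_cont: "continuous_map Y X sel"
  unfolding continuous_map
proof (intro conjI allI impI)
  show "sel ` topspace Y \<subseteq> topspace X"
  proof (rule image_subsetI)
    fix y assume y: "y \<in> topspace Y"
    have "sel y \<in> \<phi> y" using sel_in[OF y, of 0] by blast
    then show "sel y \<in> topspace X" using phi[OF y] by blast
  qed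
  fix U assume U: "openin X U"
  show "openin Y {y \<in> topspace Y. sel y \<in> U}"
  proof (subst openin_subopen, intro ballI)
    fix y assume yU: "y \<in> {y \<in> topspace Y. sel y \<in> U}"
    then have y: "y \<in> topspace Y" and syU: "sel y \<in> U" by auto
    show "\<exists>T. openin Y T \<and> y \<in> T \<and> T \<subseteq> {y \<in> topspace Y. sel y \<in> U}"
    proof (rule ccontr)
      assume C: "\<not> ?thesis"
      define k where "k = idx y"
      have ek: "e k = y" using e_idx[OF y] by (simp add: k_def)
      have stage: "\<exists>n. active n \<and> task n = (k, s)" for s
      proof -
        obtain n where n: "n \<ge> k + sum_list s" "task n = (k, s)" using task by blast
        have "\<forall>i\<in>set s. i \<le> n"
        proof
          fix i assume "i \<in> set s"
          then have "i \<le> sum_list s" by (rule member_le_sum_list) simp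
          then show "i \<le> n" using n(1) by linarith
        qed
        then have "active n" unfolding active_def using n by simp
        then show ?thesis using n by blast
      qed
      define nn where "nn s = (SOME n. active n \<and> task n = (k, s))" for s
      have nn: "active (nn s) \<and> task (nn s) = (k, s)" for s
        unfolding nn_def by (rule someI_ex) (rule stage)
      define DD where "DD s = Dset (nn s) (XS (Suc (nn s))) (OM (nn s))" for s
      have DDp: "openin Y (DD s) \<and> y \<in> DD s \<and> (\<forall>z\<in>DD s. sel z \<in> S (sel y) (map (\<lambda>i. sel (e i)) s))" for s
        using D_main[of "nn s"] nn[of s] ek by (simp add: DD_def)
      have ex: "\<exists>i. e i \<in> DD s \<and> sel (e i) \<notin> U" for s
      proof -
        have "\<not> DD s \<subseteq> {y \<in> topspace Y. sel y \<in> U}" using C DDp[of s] by blast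
        then obtain z where z: "z \<in> DD s" "z \<notin> {y \<in> topspace Y. sel y \<in> U}" by blast
        have zY: "z \<in> topspace Y" using DDp[of s] z(1) openin_subset by blast
        then have "e (idx z) \<in> DD s \<and> sel (e (idx z)) \<notin> U" using z e_idx[OF zY] by auto
        then show ?thesis by blast
      qed
      define ch where "ch s = (SOME i. e i \<in> DD s \<and> sel (e i) \<notin> U)" for s
      have ch: "e (ch s) \<in> DD s \<and> sel (e (ch s)) \<notin> U" for s
        unfolding ch_def by (rule someI_ex) (rule ex)
      define L where "L = rec_nat [] (\<lambda>m l. l @ [ch l])"
      have L: "L m = map (\<lambda>j. ch (L j)) [0..<m]" for m
        by (induction m) (simp_all add: L_def)
      define t where "t m = sel (e (ch (L m)))" for m
      have tS: "t m \<in> S (sel y) (map t [0..<m])" for m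
      proof -
        have "map t [0..<m] = map (\<lambda>i. sel (e i)) (L m)"
          by (subst L) (simp add: t_def)
        then show ?thesis using DDp[of "L m"] ch[of "L m"] by (simp add: t_def)
      qed
      have syX: "sel y \<in> topspace X" using sel_in[OF y] phi[OF y] by blast
      have "limitin X t (sel y) sequentially" using S_prop[OF syX] tS by blast
      then obtain N where "\<forall>m\<ge>N. t m \<in> U" using U syU unfolding limitin_sequentially by blast
      then have "t N \<in> U" by simp
      then show False using ch[of "L N"] by (simp add: t_def)
    qed
  qed
qed

end

theorem mainTheorem1:
  fixes X :: "'a topology" and Y :: "'b topology"
  assumes "t1_space X" and "W_space X"
    and "t1_space Y" and "regular_space Y" and "countable (topspace Y)"
  shows "strongly_selective X Y"
  unfolding strongly_selective_def
proof (intro allI impI)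
  fix \<phi> :: "'b \<Rightarrow> 'a set" assume lsc: "lsc_map Y X \<phi>"
  show "\<exists>f. continuous_map Y X f \<and> (\<forall>y\<in>topspace Y. f y \<in> \<phi> y)"
  proof (cases "topspace Y = {}")
    case True
    then show ?thesis by (intro exI[of _ "\<lambda>_. undefined"]) (simp add: continuous_map)
  next
    case False
    define e where "e = from_nat_into (topspace Y)"
    have e: "range e = topspace Y" using range_from_nat_into[OF False assms(5)] by (simp add: e_def)
    define task :: "nat \<Rightarrow> nat \<times> nat list" where "task n = snd (from_nat n :: nat \<times> nat \<times> nat list)" for n
    have task: "\<exists>n\<ge>m. task n = (k, s)" for k s m
    proof -
      define g where "g j = to_nat (j, k, s)" for j :: nat
      have "inj g" unfolding g_def inj_def using inj_to_nat[where 'a="nat \<times> nat \<times> nat list"]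
        by (simp add: inj_eq)
      then have "infinite (range g)" by (rule range_inj_infinite)
      then obtain n where n: "n \<in> range g" "m \<le> n" using infinite_nat_iff_unbounded_le by blast
      then obtain j where "n = g j" by blast
      then have "task n = (k, s)" by (simp add: task_def g_def)
      then show ?thesis using n(2) by blast
    qed
    interpret selconstr X Y \<phi> e task
    proof
      show "lsc_map Y X \<phi>" by (rule lsc)
      show "W_space X" by (rule assms(2))
      show "t1_space Y" by (rule assms(3))
      show "\<exists>D. closedin Y D \<and> openin Y D \<and> y \<in> D \<and> D \<subseteq> G"
        if "openin Y G" "y \<in> G" for y G
        by (rule countable_clopen_base[OF assms(3,4,5) that])
      show "range e = topspace Y" by (rule e)
      show "\<exists>n\<ge>m. task n = (k, s)" for k s m by (rule task)
    qed
    have "\<forall>y\<in>topspace Y. sel y \<in> \<phi> y" using sel_in[of _ 0] by blast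
    then show ?thesis using sel_cont by blast
  qed
qed

end
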